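(* Let $q$ be a prime power, and let $\chi'$ be the canonical additive character of $\mathbb{F}_{q^2}$. For integers $e_1,e_2$ and $a,b\in\mathbb{F}_{q^2}$ define $$S_{(e_1,e_2)}(a,b):=\sum_{x\in\mathbb{F}_{q^2}^*}\chi'\!\left(a x^{(q+1)e_1}+b x^{e_2}\right),\qquad T_{(e_1,e_2)}(a,b):=\sum_{y\in\mathbb{F}_q^*}S_{(e_1,e_2)}(ya,yb).$$ Suppose $a^q+a\neq 0$, $b\neq 0$ and $\gcd(q+1,e_2)=1$. Then $\gcd(q-1,2e_1-e_2)=1$ if and only if $T_{(e_1,e_2)}(a,b)=1$.
   Context: For a finite field $F$ of characteristic $p$, the canonical additive character is $\chi(c)=e^{2\pi i\,\mathrm{Tr}_{F/\mathbb{F}_p}(c)/p}$. *)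

theory Defs
  imports Complex_Main "HOL-Computational_Algebra.Primes"
begin

definition ff_degree :: "'a::{field,finite} itself \<Rightarrow> nat" where
  "ff_degree T = (THE n. card (UNIV::'a set) = CHAR('a) ^ n)"

definition abs_trace :: "'a::{field,finite} \<Rightarrow> 'a" where
  "abs_trace c = (\<Sum>i<ff_degree TYPE('a). c ^ (CHAR('a) ^ i))"

text \<open>Canonical additive character chi(c) = exp(2 pi i Tr(c)/p), where Tr(c) in F_p
  is identified with its representative k in {0..p-1}.\<close>
definition can_add_char :: "'a::{field,finite} \<Rightarrow> complex" where
  "can_add_char c =
     (let k = (THE k. k < CHAR('a) \<and> of_nat k = abs_trace c)
      in cis (2 * pi * real k / real CHAR('a)))"

definition S_sum :: "nat \<Rightarrow> int \<Rightarrow> int \<Rightarrow> 'a::{field,finite} \<Rightarrow> 'a \<Rightarrow> complex" where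
  "S_sum q e1 e2 a b =
     (\<Sum>x\<in>UNIV - {0}. can_add_char (a * x powi (int (q + 1) * e1) + b * x powi e2))"

text \<open>F_q inside F_{q^2} is the subfield {y. y^q = y}.\<close>
definition T_sum :: "nat \<Rightarrow> int \<Rightarrow> int \<Rightarrow> 'a::{field,finite} \<Rightarrow> 'a \<Rightarrow> complex" where
  "T_sum q e1 e2 a b = (\<Sum>y\<in>{y::'a. y ^ q = y \<and> y \<noteq> 0}. S_sum q e1 e2 (y * a) (y * b))"

end

theory Submission
  imports Defs "HOL-Number_Theory.Number_Theory" "HOL-Library.Real_Mod" "HOL-Computational_Algebra.Polynomial"
begin

lemma card_pow_eq_le:
  fixes c :: "'a::idom"
  assumes "n \<ge> 1"
  shows "card {x. x ^ n = c} \<le> n"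
proof -
  let ?P = "monom 1 n + [:-c:] :: 'a poly"
  have deg: "degree ?P = n" using assms by (subst degree_add_eq_left) (auto simp: degree_monom_eq)
  hence "?P \<noteq> 0" using assms by auto
  hence "card {x. poly ?P x = 0} \<le> n" using card_poly_roots_bound[of ?P] deg by simp
  moreover have "{x. poly ?P x = 0} = {x. x ^ n = c}" by (auto simp: poly_monom)
  ultimately show ?thesis by simp
qed

lemma pow_fiber:
  fixes G :: "'a::field set"
  assumes G: "0 \<notin> G" "\<And>x y. x\<in>G \<Longrightarrow> y\<in>G \<Longrightarrow> x*y \<in> G" "\<And>x. x\<in>G \<Longrightarrow> inverse x \<in> G"
    and x0: "x0 \<in> G"
  shows "{x\<in>G. x^n = x0^n} = (\<lambda>h. x0*h) ` {h\<in>G. h^n = 1}"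
proof safe
  fix x assume x: "x\<in>G" "x^n = x0^n"
  have nz: "x0 \<noteq> 0" using x0 G by auto
  have "x = x0 * (inverse x0 * x)" using nz by simp
  moreover have "inverse x0 * x \<in> G" using G x0 x by auto
  moreover have "(inverse x0 * x)^n = 1" using x nz by (simp add: power_mult_distrib power_inverse)
  ultimately show "x \<in> (\<lambda>h. x0*h) ` {h\<in>G. h^n = 1}" by blast
next
  fix h assume "h\<in>G" "h^n=1"
  thus "x0*h\<in>G" "(x0*h)^n = x0^n" using G x0 by (auto simp: power_mult_distrib)
qed

lemma pow_fiber_card:
  fixes G :: "'a::field set"
  assumes G: "0 \<notin> G" "\<And>x y. x\<in>G \<Longrightarrow> y\<in>G \<Longrightarrow> x*y \<in> G" "\<And>x. x\<in>G \<Longrightarrow> inverse x \<in> G"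
    and x0: "x0 \<in> G"
  shows "card {x\<in>G. x^n = x0^n} = card {h\<in>G. h^n = 1}"
proof -
  have "x0 \<noteq> 0" using x0 G by auto
  thus ?thesis by (subst pow_fiber[OF G x0]) (auto intro!: card_image inj_onI)
qed

lemma pow_card:
  fixes G :: "'a::field set"
  assumes fin: "finite G" and G: "0 \<notin> G" "\<And>x y. x\<in>G \<Longrightarrow> y\<in>G \<Longrightarrow> x*y \<in> G" "\<And>x. x\<in>G \<Longrightarrow> inverse x \<in> G"
  shows "card G = card {h\<in>G. h^n=1} * card ((\<lambda>x. x^n) ` G)"
proof -
  have "card G = (\<Sum>z\<in>(\<lambda>x. x^n)`G. card {x\<in>G. x^n = z})"
    using sum.group[of G "(\<lambda>x. x^n)`G" "\<lambda>x. x^n" "\<lambda>_. 1::nat"] fin by simp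
  also have "\<dots> = (\<Sum>z\<in>(\<lambda>x. x^n)`G. card {h\<in>G. h^n=1})"
    by (rule sum.cong) (auto simp: pow_fiber_card[OF G])
  finally show ?thesis by simp
qed

lemma powi_mod:
  fixes x :: "'a::field"
  assumes "x ^ N = 1" "N > 0"
  shows "x powi e = x ^ nat (e mod int N)"
proof -
  have nz: "x \<noteq> 0" using assms by (auto simp: power_0_left)
  have "x powi e = x powi (int N * (e div int N) + e mod int N)" by simp
  also have "\<dots> = x powi (int N * (e div int N)) * x powi (e mod int N)"
    using nz by (rule power_int_add[OF disjI1])
  also have "x powi (int N * (e div int N)) = 1"
    by (simp add: power_int_mult assms)
  also have "x powi (e mod int N) = x ^ nat (e mod int N)"
    using assms by (simp add: power_int_nonneg_exp)
  finally show ?thesis by simp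
qed

lemma pow_mod_nat: "(l::'a::field) ^ N = 1 \<Longrightarrow> l ^ m = l ^ (m mod N)"
proof -
  assume h: "l ^ N = 1"
  have "l ^ m = l ^ (N * (m div N) + m mod N)" by simp
  also have "\<dots> = (l ^ N) ^ (m div N) * l ^ (m mod N)" by (simp only: power_add power_mult)
  finally show ?thesis using h by simp
qed

lemma root_unique:
  fixes r :: "'a::field"
  assumes "N > 0" "coprime m N" "r ^ N = 1"
  shows "card {z. z ^ N = 1 \<and> z ^ m = r} = 1"
proof -
  obtain u where u: "[m * u = Suc 0] (mod N)" using cong_solve_coprime_nat[OF assms(2)] by blast
  have key: "z ^ (m * u) = z" if "z ^ N = 1" for z :: 'a
  proof -
    have "z ^ (m * u) = z ^ ((m * u) mod N)" by (rule pow_mod_nat[OF that])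
    also have "(m * u) mod N = Suc 0 mod N" using u by (simp add: cong_def)
    also have "z ^ (Suc 0 mod N) = z ^ Suc 0" by (rule pow_mod_nat[OF that, symmetric])
    finally show ?thesis by simp
  qed
  have "{z. z ^ N = 1 \<and> z ^ m = r} = {r ^ u}"
  proof safe
    fix z :: 'a assume z: "z ^ N = 1" "r = z ^ m"
    have "(z ^ m) ^ u = z" using key[OF z(1)] by (simp add: power_mult)
    thus "z = (z ^ m) ^ u" by simp
  next
    have "(r ^ u) ^ N = (r ^ N) ^ u" by (simp add: power_mult[symmetric] mult.commute)
    thus "(r ^ u) ^ N = 1" using assms by simp
    have "(r ^ u) ^ m = r ^ (m * u)" by (simp add: power_mult[symmetric] mult.commute)
    thus "(r ^ u) ^ m = r" using key[OF assms(3)] by simp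
  qed
  thus ?thesis by simp
qed

lemma root_none:
  fixes r :: "'a::field"
  assumes "r ^ N \<noteq> 1"
  shows "{z. z ^ N = 1 \<and> z ^ m = r} = {}"
proof -
  have False if z: "z ^ N = 1" "z ^ m = r" for z :: 'a
  proof -
    have "(z ^ m) ^ N = (z ^ N) ^ m" by (simp only: power_mult[symmetric] mult.commute)
    hence "r ^ N = 1" using z by simp
    thus False using assms by simp
  qed
  thus ?thesis by blast
qed

lemma gcd_transfer:
  assumes "N > 0"
  shows "gcd (int N) d = int (gcd N (nat (d mod int N)))"
proof -
  have "int (nat (d mod int N)) = d mod int N" using assms by simp
  hence "int (gcd N (nat (d mod int N))) = gcd (int N) (d mod int N)"
    by (metis gcd_int_int_eq of_nat_eq_iff)
  also have "\<dots> = gcd (int N) d" using assms by (simp add: gcd_mod_right)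
  finally show ?thesis by simp
qed

locale ffc =
  fixes p k q :: nat and T :: "'a::{field,finite} itself"
  assumes p: "prime p" and k: "k > 0" and q: "q = p ^ k"
    and card: "card (UNIV :: 'a set) = q ^ 2"
begin

lemma CHAR_eq: "CHAR('a) = p"
proof -
  have "CHAR('a) dvd p^(2*k)" using CHAR_dvd_CARD[where 'a='a] card q
    by (simp add: power_mult mult.commute)
  moreover have pc: "prime CHAR('a)" by (rule prime_CHAR_semidom) (simp add: finite_imp_CHAR_pos)
  ultimately have "CHAR('a) dvd p" using prime_dvd_power by blast
  thus ?thesis using primes_dvd_imp_eq pc p by blast
qed

lemma q_ge2: "q \<ge> 2" using q k prime_ge_2_nat[OF p]
  by (metis One_nat_def less_one not_less power_increasing_iff power_one_right Suc_leI le_trans self_le_power)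

lemma ff_degree_eq: "ff_degree TYPE('a) = 2 * k"
proof -
  have p1: "p > 1" using prime_gt_1_nat p by blast
  have "card (UNIV::'a set) = p ^ (2*k)" using card q by (simp add: power_mult mult.commute)
  thus ?thesis unfolding ff_degree_def CHAR_eq
    using power_inject_exp[OF p1] by (intro the_equality) auto
qed

lemma frob: "(x + y :: 'a) ^ (p ^ i) = x ^ (p ^ i) + y ^ (p ^ i)"
  by (rule freshmans_dream') (simp_all add: CHAR_eq p)

lemma frob_sum: "(sum f A :: 'a) ^ (p ^ i) = (\<Sum>j\<in>A. f j ^ (p ^ i))"
  by (rule freshmans_dream_sum') (simp_all add: CHAR_eq p)

lemma frob_neg: "(- x :: 'a) ^ (p ^ i) = - (x ^ (p ^ i))"
proof -
  have "0 = (x + - x) ^ (p ^ i)" using prime_gt_0_nat[OF p] by simp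
  also have "\<dots> = x ^ (p^i) + (-x) ^ (p^i)" by (rule frob)
  finally show ?thesis by (simp add: eq_neg_iff_add_eq_0 add.commute)
qed

lemma frobq: "(x + y :: 'a) ^ q = x ^ q + y ^ q" unfolding q by (rule frob)
lemma frobq_neg: "(- x :: 'a) ^ q = - (x ^ q)" unfolding q by (rule frob_neg)

lemma pow_card_same: "(x::'a) ^ (q^2) = x"
proof (cases "x = 0")
  case False
  have "x * (\<Prod>y\<in>UNIV-{0}. x * y) = x * x ^ (card (UNIV :: 'a set) - 1) * \<Prod>(UNIV-{0})"
    by (simp add: prod.distrib mult_ac)
  also have "x * x ^ (card (UNIV :: 'a set) - 1) = x ^ Suc (card (UNIV :: 'a set) - 1)"
    by (subst power_Suc) auto
  also have "Suc (card (UNIV :: 'a set) - 1) = card (UNIV :: 'a set)"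
    using finite_UNIV_card_ge_0[where ?'a = 'a] by simp
  also have "(\<Prod>y\<in>UNIV-{0}. x * y) = (\<Prod>y\<in>UNIV-{0}. y)"
    by (rule prod.reindex_bij_witness[of _ "\<lambda>y. y / x" "\<lambda>y. x * y"]) (use False in auto)
  finally show ?thesis
    using card by simp
qed (use q_ge2 in auto)

lemma p_gt1: "p > 1" using prime_gt_1_nat p by blast

lemma of_nat_pow_p: "(of_nat j :: 'a) ^ p = of_nat j"
proof (induction j)
  case 0 thus ?case using p_gt1 by simp
next
  case (Suc j)
  have "(of_nat j + 1 :: 'a) ^ (p^1) = of_nat j ^ (p^1) + 1 ^ (p^1)" by (rule frob)
  thus ?case using Suc by (simp add: add.commute)
qed

lemma prime_field: assumes "(y::'a) ^ p = y" shows "\<exists>j<p. of_nat j = y"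
proof -
  let ?S = "(of_nat :: nat \<Rightarrow> 'a) ` {..<p}"
  let ?R = "{y::'a. y ^ p = y}"
  have inj: "inj_on (of_nat :: nat \<Rightarrow> 'a) {..<p}"
    by (auto intro!: inj_onI simp: of_nat_eq_iff_cong_CHAR CHAR_eq cong_def)
  have cS: "card ?S = p" using card_image[OF inj] by simp
  have sub: "?S \<subseteq> ?R" using of_nat_pow_p by auto
  have "?R \<subseteq> insert 0 {y. y ^ (p - 1) = 1}"
  proof
    fix y assume "y \<in> ?R"
    hence "y ^ (Suc (p - 1)) = y" using p_gt1 by simp
    hence "y = 0 \<or> y ^ (p-1) = 1" by auto
    thus "y \<in> insert 0 {y. y ^ (p - 1) = 1}" by auto
  qed
  hence "card ?R \<le> card (insert 0 {y::'a. y ^ (p - 1) = 1})" by (intro card_mono) auto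
  also have "\<dots> \<le> Suc (card {y::'a. y ^ (p - 1) = 1})" by (rule card_insert_le_m1) auto
  also have "\<dots> \<le> Suc (p - 1)" using card_pow_eq_le[of "p-1" "1::'a"] p_gt1 by (simp add: Suc_le_eq)
  finally have "card ?R \<le> p" using p_gt1 by simp
  hence "?S = ?R" using card_subset_eq[OF _ sub] cS card_mono[OF _ sub] by (intro card_subset_eq[OF _ sub]) auto
  hence "y \<in> ?S" using assms by simp
  thus ?thesis by auto
qed

lemma abs_trace_eq: "abs_trace (c::'a) = (\<Sum>i<2*k. c ^ (p ^ i))"
  unfolding abs_trace_def ff_degree_eq CHAR_eq ..

lemma q2: "q^2 = p^(2*k)" using q by (simp add: power_mult mult.commute)

lemma abs_trace_pow: "abs_trace (c::'a) ^ p = abs_trace c"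
proof -
  obtain m where m: "2*k = Suc m" using k by (cases "2*k") auto
  have "abs_trace c ^ (p^1) = (\<Sum>i<2*k. (c ^ (p ^ i)) ^ (p^1))" unfolding abs_trace_eq by (rule frob_sum)
  also have "\<dots> = (\<Sum>i<Suc m. c ^ (p ^ Suc i))" unfolding m
    by (intro sum.cong refl) (simp add: power_mult[symmetric] mult.commute)
  also have "\<dots> = (\<Sum>i<Suc m. c ^ (p ^ i))"
  proof -
    have A: "(\<Sum>i<Suc (Suc m). c ^ (p ^ i)) = c ^ (p^0) + (\<Sum>i<Suc m. c ^ (p ^ Suc i))"
      by (rule sum.lessThan_Suc_shift)
    have B: "(\<Sum>i<Suc (Suc m). c ^ (p ^ i)) = (\<Sum>i<Suc m. c ^ (p ^ i)) + c ^ (p ^ Suc m)"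
      by (rule sum.lessThan_Suc)
    have "c ^ (p ^ Suc m) = c" using pow_card_same[of c] by (simp add: q2 m[symmetric])
    thus ?thesis using A B by simp
  qed
  finally show ?thesis by (simp add: abs_trace_eq m)
qed

definition trk :: "'a \<Rightarrow> nat" where "trk c = (THE j. j < p \<and> of_nat j = abs_trace c)"

lemma trk: "trk c < p \<and> of_nat (trk c) = abs_trace c"
proof -
  have ex: "\<exists>j<p. of_nat j = abs_trace c" by (rule prime_field[OF abs_trace_pow])
  have "\<exists>!j. j < p \<and> of_nat j = abs_trace c"
  proof (rule ex_ex1I)
    show "\<exists>j. j < p \<and> of_nat j = abs_trace c" using ex by blast
  next
    fix j l assume "j < p \<and> of_nat j = abs_trace c" "l < p \<and> of_nat l = abs_trace c"
    hence "of_nat j = (of_nat l :: 'a)" "j < p" "l < p" by auto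
    hence "j mod p = l mod p" "j < p" "l < p" by (auto simp only: of_nat_eq_iff_cong_CHAR CHAR_eq cong_def)
    thus "j = l" by simp
  qed
  thus ?thesis unfolding trk_def by (rule theI')
qed

lemma char_eq: assumes "of_nat j = abs_trace (c::'a)"
  shows "can_add_char c = cis (2 * pi * real j / real p)"
proof -
  have eq1: "can_add_char c = cis (2 * pi * real (trk c) / real p)"
    unfolding can_add_char_def Let_def CHAR_eq trk_def ..
  have "of_nat (trk c) = (of_nat j :: 'a)" using trk[of c] assms by simp
  hence "[trk c = j] (mod p)" by (simp only: of_nat_eq_iff_cong_CHAR CHAR_eq)
  then obtain k1 k2 where kk: "j + k1 * p = trk c + k2 * p" by (auto simp: cong_iff_lin_nat)
  hence "real j = real (trk c) + (real k2 - real k1) * real p" 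
    using arg_cong[OF kk, of real] by (simp add: left_diff_distrib; linarith)
  hence "2 * pi * real j / real p = 2 * pi * (real (trk c) + (real k2 - real k1) * real p) / real p"
    by simp
  also have "\<dots> = 2 * pi * real (trk c) / real p + (real k2 - real k1) * (2 * pi)"
    using p_gt1 by (simp add: field_simps)
  finally have "2 * pi * real j / real p = 2 * pi * real (trk c) / real p + of_int (int k2 - int k1) * (2 * pi)"
    by simp
  hence "cis (2 * pi * real j / real p) = cis (2 * pi * real (trk c) / real p) * cis (of_int (int k2 - int k1) * (2 * pi))"
    by (simp add: cis_mult)
  moreover have "cis (of_int (int k2 - int k1) * (2 * pi)) = 1" by (subst cis_eq_1_iff) blast
  ultimately show ?thesis using eq1 by simp
qed

lemma abs_trace_add: "abs_trace (u + v :: 'a) = abs_trace u + abs_trace v"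
  unfolding abs_trace_eq by (simp add: frob sum.distrib)

lemma char_add: "can_add_char (u + v :: 'a) = can_add_char u * can_add_char v"
proof -
  have "of_nat (trk u + trk v) = abs_trace (u + v)" using trk[of u] trk[of v] abs_trace_add by simp
  hence "can_add_char (u+v) = cis (2 * pi * real (trk u + trk v) / real p)" by (rule char_eq)
  also have "\<dots> = cis (2 * pi * real (trk u) / real p) * cis (2 * pi * real (trk v) / real p)"
    by (simp add: cis_mult add_divide_distrib distrib_left)
  also have "\<dots> = can_add_char u * can_add_char v" using char_eq[OF conjunct2[OF trk]] by simp
  finally show ?thesis .
qed

lemma char_trace0: assumes "abs_trace (c::'a) = 0" shows "can_add_char c = 1"
  using char_eq[of 0 c] assms by simp

lemma char_ne1: assumes "abs_trace (c::'a) \<noteq> 0" shows "can_add_char c \<noteq> 1"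
proof
  assume "can_add_char c = 1"
  hence "cis (2 * pi * real (trk c) / real p) = 1" using char_eq[OF conjunct2[OF trk]] by simp
  then obtain m where m: "2 * pi * real (trk c) / real p = of_int m * (2 * pi)" by (auto simp: cis_eq_1_iff)
  hence "real (trk c) = of_int m * real p" using p_gt1 by (simp add: field_simps)
  hence eq: "int (trk c) = m * int p" by (metis of_int_eq_iff of_int_mult of_int_of_nat_eq)
  have "trk c \<noteq> 0" using trk[of c] assms by (metis of_nat_0)
  hence "0 < m * int p" using eq by simp
  hence "m > 0" using p_gt1 by (simp add: zero_less_mult_iff)
  hence "1 * int p \<le> m * int p" by (intro mult_right_mono) auto
  hence "int (trk c) \<ge> int p" using eq by simp
  thus False using trk[of c] by simp
qed

definition "Kst = {y::'a. y ^ q = y \<and> y \<noteq> 0}"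
definition "Kf = {y::'a. y ^ q = y}"
definition "mu = {z::'a. z ^ (q+1) = 1}"

lemma q_pos: "q > 0" using q_ge2 by simp

lemma Kst_alt: "Kst = {y. y \<noteq> 0 \<and> y ^ (q-1) = 1}"
proof -
  have "y ^ q = y \<longleftrightarrow> y = 0 \<or> y ^ (q-1) = 1" for y :: 'a
  proof -
    have "y ^ q = y * y ^ (q-1)" using q_pos by (cases q) auto
    thus ?thesis by auto
  qed
  thus ?thesis unfolding Kst_def by auto
qed

lemma Kf_insert: "Kf = insert 0 Kst" unfolding Kf_def Kst_def using q_pos by (auto simp: power_0_left)

lemma Kst_mult: "x \<in> Kst \<Longrightarrow> y \<in> Kst \<Longrightarrow> x * y \<in> Kst"
  unfolding Kst_def by (auto simp: power_mult_distrib)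
lemma Kst_inv: "x \<in> Kst \<Longrightarrow> inverse x \<in> Kst"
  unfolding Kst_def by (auto simp: power_inverse)
lemma Kst_nz: "0 \<notin> Kst" unfolding Kst_def by auto

lemma Kf_add: "x \<in> Kf \<Longrightarrow> y \<in> Kf \<Longrightarrow> x + y \<in> Kf" unfolding Kf_def by (auto simp: frobq)
lemma Kf_neg: "x \<in> Kf \<Longrightarrow> - x \<in> Kf" unfolding Kf_def by (auto simp: frobq_neg)
lemma Kf_mult: "x \<in> Kf \<Longrightarrow> y \<in> Kf \<Longrightarrow> x * y \<in> Kf" unfolding Kf_def by (auto simp: power_mult_distrib)

lemma pow_q2: "((x::'a) ^ q) ^ q = x" using pow_card_same[of x] by (simp add: power_mult[symmetric] power2_eq_square)

lemma nz_pow: "(x::'a) \<noteq> 0 \<Longrightarrow> x ^ ((q-1)*(q+1)) = 1"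
proof -
  assume x: "x \<noteq> 0"
  obtain r where r: "q = Suc r" using q_pos by (cases q) auto
  have e: "(q-1)*(q+1) = r * Suc (Suc r)" using r by simp
  have "q^2 = Suc (r * Suc (Suc r))" using r by (simp add: power2_eq_square)
  hence "x * x ^ (r * Suc (Suc r)) = x * 1" using pow_card_same[of x] by simp
  thus ?thesis using x e by simp
qed

lemma image_sub_mu: "(\<lambda>x::'a. x ^ (q-1)) ` (UNIV - {0}) \<subseteq> mu"
  unfolding mu_def
proof safe
  fix x :: 'a assume "x \<noteq> 0"
  have "(x ^ (q-1)) ^ (q+1) = x ^ ((q-1)*(q+1))" by (rule power_mult[symmetric])
  thus "(x ^ (q-1)) ^ (q+1) = 1" using nz_pow[OF \<open>x \<noteq> 0\<close>] by simp
qed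

lemma sizes: "card Kst = q - 1 \<and> (\<lambda>x::'a. x ^ (q-1)) ` (UNIV - {0}) = mu \<and> card mu = q + 1"
proof -
  let ?I = "(\<lambda>x::'a. x ^ (q-1)) ` (UNIV - {0})"
  have G: "0 \<notin> (UNIV - {0::'a})" "\<And>x y. x\<in>UNIV - {0::'a} \<Longrightarrow> y\<in>UNIV - {0} \<Longrightarrow> x*y \<in> UNIV - {0}"
      "\<And>x. x\<in>UNIV - {0::'a} \<Longrightarrow> inverse x \<in> UNIV - {0}" by auto
  have c1: "card (UNIV - {0::'a}) = (q-1)*(q+1)"
    using card q_pos by (simp add: power2_eq_square algebra_simps)
  have eqK: "{h \<in> UNIV - {0::'a}. h ^ (q-1) = 1} = Kst" unfolding Kst_alt by auto
  have main: "(q-1)*(q+1) = card Kst * card ?I"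
    using pow_card[OF _ G, of "q-1"] c1 eqK by simp
  have "Kst \<subseteq> {x::'a. x^(q-1) = 1}" unfolding Kst_alt by auto
  hence "card Kst \<le> card {x::'a. x^(q-1) = 1}" by (intro card_mono) auto
  also have "\<dots> \<le> q - 1" using q_ge2 by (intro card_pow_eq_le) simp
  finally have a: "card Kst \<le> q - 1" .
  have b: "card mu \<le> q + 1" unfolding mu_def using card_pow_eq_le[of "q+1" "1::'a"] by simp
  have b': "card ?I \<le> card mu" by (rule card_mono[OF _ image_sub_mu]) simp
  have m1: "card Kst * card ?I \<le> card Kst * (q+1)" using b b' by (intro mult_le_mono2) simp
  have m2: "card Kst * (q+1) \<le> (q-1)*(q+1)" using a by (intro mult_le_mono1)
  have e1: "card Kst * (q+1) = (q-1)*(q+1)" using main m1 m2 by linarith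
  hence ka: "card Kst = q - 1" by (rule mult_right_cancel[THEN iffD1, rotated]) simp
  have "(q-1) * card ?I = (q-1) * (q+1)" using main ka by simp
  hence "card ?I = q + 1" by (rule mult_left_cancel[THEN iffD1, rotated]) (use q_ge2 in simp)
  hence "card ?I = card mu" using b b' by simp
  hence "?I = mu" by (intro card_subset_eq[OF _ image_sub_mu]) simp_all
  thus ?thesis using ka \<open>card ?I = q + 1\<close> by simp
qed

lemma card_Kst: "card Kst = q - 1" using sizes by simp
lemma card_mu: "card mu = q + 1" using sizes by simp
lemma card_Kf: "card Kf = q" using card_Kst q_ge2 Kst_nz by (simp add: Kf_insert)

lemma surj_mu: assumes "z \<in> mu" obtains x :: 'a where "x \<noteq> 0" "x ^ (q-1) = z"
proof -
  have "z \<in> (\<lambda>x::'a. x ^ (q-1)) ` (UNIV - {0})" using sizes assms by simp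
  then obtain x where "x \<noteq> 0" "x ^ (q-1) = z" by blast
  thus ?thesis using that by blast
qed

lemma fiber_mu: assumes "(x0::'a) \<noteq> 0"
  shows "{x. x \<noteq> 0 \<and> x ^ (q-1) = x0 ^ (q-1)} = (\<lambda>l. x0 * l) ` Kst"
proof -
  have G: "0 \<notin> (UNIV - {0::'a})" "\<And>x y. x\<in>UNIV - {0::'a} \<Longrightarrow> y\<in>UNIV - {0} \<Longrightarrow> x*y \<in> UNIV - {0}"
      "\<And>x. x\<in>UNIV - {0::'a} \<Longrightarrow> inverse x \<in> UNIV - {0}" by auto
  have eqK: "{h \<in> UNIV - {0::'a}. h ^ (q-1) = 1} = Kst" unfolding Kst_alt by auto
  have "{x \<in> UNIV - {0}. x ^ (q-1) = x0 ^ (q-1)} = (\<lambda>h. x0*h) ` {h\<in>UNIV - {0}. h^(q-1) = 1}"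
    using pow_fiber[OF G] assms by simp
  thus ?thesis using eqK by auto
qed

definition "sig c = c + c ^ q"

lemma sig_Kf: "sig (c::'a) \<in> Kf" unfolding sig_def Kf_def by (simp add: frobq pow_q2 add.commute)

lemma sum_split: "(\<Sum>i<n+(m::nat). f i) = (\<Sum>i<n. f i) + (\<Sum>i<m. f (n+i))"
  by (induction m) (simp_all add: add.assoc)

lemma abs_trace_rel: "abs_trace (c::'a) = (\<Sum>i<k. sig c ^ (p ^ i))"
proof -
  have "abs_trace c = (\<Sum>i<k+k. c ^ (p ^ i))" unfolding abs_trace_eq by (simp add: mult_2)
  also have "\<dots> = (\<Sum>i<k. c ^ (p ^ i)) + (\<Sum>i<k. (c ^ q) ^ (p ^ i))"
    by (subst sum_split) (simp add: q power_add power_mult)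
  also have "\<dots> = (\<Sum>i<k. sig c ^ (p ^ i))" unfolding sig_def by (simp add: frob sum.distrib)
  finally show ?thesis .
qed

lemma sig_mult: "y \<in> Kf \<Longrightarrow> sig (y * c) = y * sig (c::'a)"
  unfolding sig_def Kf_def by (simp add: power_mult_distrib distrib_left)

lemma trace_nonzero:
  assumes s: "(s::'a) \<in> Kf" "s \<noteq> 0"
  shows "\<exists>y\<in>Kf. (\<Sum>i<k. (y * s) ^ (p ^ i)) \<noteq> 0"
proof (rule ccontr)
  assume "\<not> ?thesis"
  hence all: "\<forall>y\<in>Kf. (\<Sum>i<k. (y * s) ^ (p ^ i)) = 0" by blast
  define P :: "'a poly" where "P = (\<Sum>i<k. monom 1 (p ^ i))"
  have evalP: "poly P x = (\<Sum>i<k. x ^ (p ^ i))" for x unfolding P_def by (simp add: poly_sum poly_monom)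
  have "coeff P 1 = (\<Sum>i<k. if i = 0 then 1 else 0)"
    unfolding P_def coeff_sum using p_gt1 by (intro sum.cong refl) (auto simp: coeff_monom)
  also have "\<dots> = 1" using k by simp
  finally have "P \<noteq> 0" by auto
  have "degree P \<le> p ^ (k-1)" unfolding P_def
    by (rule degree_sum_le) (auto intro!: order.trans[OF degree_monom_le] power_increasing simp: Suc_le_eq p_gt1 prime_gt_0_nat[OF p])
  moreover have "p ^ (k-1) < p ^ k" using p_gt1 k by (intro power_strict_increasing) auto
  ultimately have dP: "degree P < q" using q by simp
  have "(\<lambda>y. y * s) ` Kf \<subseteq> {x. poly P x = 0}" using all evalP by auto
  hence "card ((\<lambda>y. y * s) ` Kf) \<le> card {x. poly P x = 0}" by (intro card_mono) auto
  also have "\<dots> \<le> degree P" by (rule card_poly_roots_bound) fact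
  finally have "card Kf \<le> degree P" using s by (subst (asm) card_image) (auto intro: inj_onI)
  thus False using dP card_Kf by simp
qed

lemma char_zero: "can_add_char (0::'a) = 1"
proof -
  have "abs_trace (0::'a) = 0" unfolding abs_trace_eq using prime_gt_0_nat[OF p] by (simp add: power_0_left)
  thus ?thesis by (rule char_trace0)
qed

lemma char_sum:
  "(\<Sum>y\<in>Kst. can_add_char (y * (t::'a))) = (if sig t = 0 then of_nat (q-1) else -1)"
proof -
  have tr: "abs_trace (y * t) = (\<Sum>i<k. (y * sig t) ^ (p ^ i))" if "y \<in> Kf" for y
    using that by (simp add: abs_trace_rel sig_mult)
  show ?thesis
  proof (cases "sig t = 0")
    case True
    have z: "(\<Sum>i<k. (0::'a) ^ p ^ i) = 0" using prime_gt_0_nat[OF p] by (simp add: power_0_left)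
    have "can_add_char (y * t) = 1" if "y \<in> Kst" for y
      using that True tr[of y] z by (intro char_trace0) (auto simp: Kf_insert)
    hence "(\<Sum>y\<in>Kst. can_add_char (y * t)) = of_nat (card Kst)" by simp
    thus ?thesis using True card_Kst by simp
  next
    case False
    obtain y0 where y0: "y0 \<in> Kf" "(\<Sum>i<k. (y0 * sig t) ^ (p ^ i)) \<noteq> 0"
      using trace_nonzero[OF sig_Kf False] by blast
    have c0: "can_add_char (y0 * t) \<noteq> 1" using y0 tr by (intro char_ne1) simp
    define S where "S = (\<Sum>y\<in>Kf. can_add_char (y * t))"
    have m1: "a - y0 \<in> Kf" if "a \<in> Kf" for a
      using Kf_add[OF that Kf_neg[OF y0(1)]] by simp
    have m2: "a + y0 \<in> Kf" if "a \<in> Kf" for a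
      using Kf_add[OF that y0(1)] by simp
    have "S = (\<Sum>y\<in>Kf. can_add_char ((y + y0) * t))" unfolding S_def
      by (rule sum.reindex_bij_witness[of _ "\<lambda>y. y + y0" "\<lambda>y. y - y0"])
         (simp_all add: m1 m2)
    also have "\<dots> = (\<Sum>y\<in>Kf. can_add_char (y * t) * can_add_char (y0 * t))"
      by (intro sum.cong refl) (simp only: distrib_right char_add)
    also have "\<dots> = S * can_add_char (y0 * t)" unfolding S_def
      by (rule sum_distrib_right[symmetric])
    finally have "S * (can_add_char (y0 * t) - 1) = 0" by (simp add: algebra_simps)
    hence S0: "S = 0" using c0 by simp
    have "S = can_add_char (0 * t) + (\<Sum>y\<in>Kst. can_add_char (y * t))"
      unfolding S_def Kf_insert using Kst_nz by (subst sum.insert) auto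
    moreover have "can_add_char (0 * t) = 1" using char_zero by simp
    ultimately show ?thesis using S0 False by (simp add: eq_neg_iff_add_eq_0 add.commute)
  qed
qed

end


lemma gcd_int_helper:
  assumes "N > 0"
  shows "gcd (int N) d = 1 \<longleftrightarrow> coprime (nat (d mod int N)) N"
proof -
  have h: "gcd (int N) d = int (gcd N (nat (d mod int N)))" by (rule gcd_transfer[OF assms])
  have "gcd (int N) d = 1 \<longleftrightarrow> gcd N (nat (d mod int N)) = 1" unfolding h by (rule of_nat_eq_1_iff)
  also have "\<dots> \<longleftrightarrow> coprime N (nat (d mod int N))" by (rule coprime_iff_gcd_eq_1[symmetric])
  also have "\<dots> \<longleftrightarrow> coprime (nat (d mod int N)) N" by (rule coprime_commute)
  finally show ?thesis .
qed

context ffc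
begin

lemma Kst_alt2: "Kst = {l::'a. l ^ (q-1) = 1}"
  unfolding Kst_alt using q_ge2 by (auto simp: power_0_left)

lemma Kf_inv: "x \<in> Kf \<Longrightarrow> inverse (x::'a) \<in> Kf" unfolding Kf_def by (auto simp: power_inverse)

lemma Kf_powi: "x \<in> Kf \<Longrightarrow> (x::'a) powi e \<in> Kf"
proof -
  assume "x \<in> Kf"
  hence "x ^ q = x" unfolding Kf_def by simp
  have "(x powi e) ^ q = x powi (e * int q)" by (rule power_int_power')
  also have "\<dots> = (x ^ q) powi e" by (simp add: power_int_power mult.commute)
  finally show ?thesis using \<open>x ^ q = x\<close> unfolding Kf_def by simp
qed

lemma Kf_nonzero_pow: "r \<in> Kf \<Longrightarrow> (r::'a) ^ (q-1) = 1 \<longleftrightarrow> r \<noteq> 0"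
  using Kst_alt2 unfolding Kf_insert Kst_def by auto

lemma sig_add: "sig (u + v :: 'a) = sig u + sig v" unfolding sig_def by (simp add: frobq)

lemma N_Kf: "(x0::'a) ^ (q+1) \<in> Kf"
proof -
  have "(x0 ^ (q+1)) ^ q = ((x0 ^ q) ^ q) * x0 ^ q" by (simp add: power_mult_distrib)
  also have "\<dots> = x0 ^ (q+1)" by (simp add: pow_q2 mult.commute)
  finally show ?thesis unfolding Kf_def by simp
qed

lemma neg1_pow: "(-1::'a) ^ (q+1) = 1"
proof -
  have "(-1::'a) ^ q = - 1" using frobq_neg[of 1] by simp
  thus ?thesis by simp
qed

context
  fixes a b :: 'a and e1 e2 :: int
  assumes sa: "a ^ q + a \<noteq> 0" and bnz: "b \<noteq> 0" and ge: "gcd (int q + 1) e2 = 1"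
begin

definition "cx x = a * x powi (int (q + 1) * e1) + b * x powi e2"
definition "Zs = {x. x \<noteq> 0 \<and> sig (cx x) = 0}"
definition "CC x0 = (x0 ^ (q+1)) powi e1 * sig a"
definition "BB x0 = sig (b * x0 powi e2)"
definition "dd = 2 * e1 - e2"
definition "nd = nat (dd mod int (q - 1))"
definition "ne = nat (e2 mod int (q + 1))"
definition "r0 x0 = - BB x0 / CC x0"

lemma sig_a: "sig a \<noteq> 0" "sig a \<in> Kf" using sa sig_Kf unfolding sig_def by (auto simp: add.commute)

lemma CC_nz: "x0 \<noteq> 0 \<Longrightarrow> CC x0 \<noteq> 0" unfolding CC_def using sig_a by simp
lemma CC_Kf: "CC x0 \<in> Kf" unfolding CC_def using sig_a by (intro Kf_mult Kf_powi N_Kf)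
lemma r0_Kf: "r0 x0 \<in> Kf" unfolding r0_def divide_inverse BB_def
  using CC_Kf by (intro Kf_mult Kf_neg Kf_inv sig_Kf)

lemma sig_cx:
  assumes x0: "x0 \<noteq> 0" and l: "l \<in> Kst"
  shows "sig (cx (x0 * l)) = l powi e2 * (l powi dd * CC x0 + BB x0)"
proof -
  have l0: "l \<noteq> 0" and lK: "l \<in> Kf" and lq: "l ^ q = l" using l unfolding Kst_def Kf_def by auto
  have lq1: "l ^ (q+1) = l ^ 2" using lq by (simp add: power2_eq_square)
  let ?N = "x0 ^ (q+1)"
  have h1: "(x0 * l) powi (int (q+1) * e1) = l powi (2 * e1) * ?N powi e1"
  proof -
    have "(x0 * l) powi (int (q+1) * e1) = ((x0 * l) ^ (q+1)) powi e1" by (simp only: power_int_power)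
    also have "(x0 * l) ^ (q+1) = ?N * l ^ 2" by (simp add: power_mult_distrib lq power2_eq_square)
    also have "(?N * l ^ 2) powi e1 = ?N powi e1 * (l ^ 2) powi e1" by (rule power_int_mult_distrib)
    also have "(l ^ 2) powi e1 = l powi (2 * e1)" by (simp add: power_int_power)
    finally show ?thesis by (simp add: mult.commute)
  qed
  have h2: "(x0 * l) powi e2 = l powi e2 * x0 powi e2" by (simp add: power_int_mult_distrib mult.commute)
  have WK: "l powi (2 * e1) * ?N powi e1 \<in> Kf" using lK by (intro Kf_mult Kf_powi N_Kf)
  have "cx (x0 * l) = (l powi (2 * e1) * ?N powi e1) * a + l powi e2 * (b * x0 powi e2)"
    unfolding cx_def h1 h2 by (simp add: mult_ac)
  hence "sig (cx (x0 * l)) = sig ((l powi (2 * e1) * ?N powi e1) * a) + sig (l powi e2 * (b * x0 powi e2))"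
    by (simp only: sig_add)
  also have "\<dots> = (l powi (2 * e1) * ?N powi e1) * sig a + l powi e2 * BB x0"
    unfolding BB_def using WK lK by (simp add: sig_mult Kf_powi)
  also have "l powi (2 * e1) = l powi dd * l powi e2" unfolding dd_def
    using l0 by (simp flip: power_int_add)
  finally show ?thesis unfolding CC_def by (simp add: distrib_left mult_ac)
qed

lemma in_Zs_iff:
  assumes x0: "x0 \<noteq> 0" and l: "l \<in> Kst"
  shows "x0 * l \<in> Zs \<longleftrightarrow> l ^ nd = r0 x0"
proof -
  have l0: "l \<noteq> 0" and l1: "l ^ (q-1) = 1" using l Kst_alt2 unfolding Kst_def by auto
  have "x0 * l \<in> Zs \<longleftrightarrow> l powi dd * CC x0 + BB x0 = 0"
    unfolding Zs_def using sig_cx[OF x0 l] l0 x0 by simp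
  also have "\<dots> \<longleftrightarrow> l powi dd * CC x0 = - BB x0" by (rule eq_neg_iff_add_eq_0[symmetric])
  also have "\<dots> \<longleftrightarrow> l powi dd = r0 x0"
    unfolding r0_def using CC_nz[OF x0] by (rule nonzero_eq_divide_eq[symmetric])
  also have "l powi dd = l ^ nd" unfolding nd_def using l1 q_ge2 by (intro powi_mod) auto
  finally show ?thesis .
qed

lemma fiber_Zs:
  assumes x0: "x0 \<noteq> 0"
  shows "card {x \<in> Zs. x ^ (q-1) = x0 ^ (q-1)} = card {l::'a. l ^ (q-1) = 1 \<and> l ^ nd = r0 x0}"
proof -
  have "{x \<in> Zs. x ^ (q-1) = x0 ^ (q-1)} = {x. x \<noteq> 0 \<and> x ^ (q-1) = x0 ^ (q-1)} \<inter> Zs"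
    unfolding Zs_def by auto
  also have "\<dots> = ((\<lambda>l. x0 * l) ` Kst) \<inter> Zs" using fiber_mu[OF x0] by simp
  also have "\<dots> = (\<lambda>l. x0 * l) ` {l \<in> Kst. l ^ nd = r0 x0}" using in_Zs_iff[OF x0] by auto
  finally have "card {x \<in> Zs. x ^ (q-1) = x0 ^ (q-1)} = card {l \<in> Kst. l ^ nd = r0 x0}"
    using x0 by (simp add: card_image inj_on_def)
  thus ?thesis unfolding Kst_alt2 by simp
qed

lemma card_Zs_sum: "card Zs = (\<Sum>z\<in>mu. card {x \<in> Zs. x ^ (q-1) = z})"
proof -
  have "(\<lambda>x. x ^ (q-1)) ` Zs \<subseteq> mu" using image_sub_mu unfolding Zs_def by auto
  hence "(\<Sum>z\<in>mu. \<Sum>x\<in>{x. x \<in> Zs \<and> x ^ (q-1) = z}. 1) = (\<Sum>x\<in>Zs. 1::nat)"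
    by (intro sum.group) auto
  thus ?thesis by simp
qed

lemma BB_zero:
  assumes x0: "x0 \<noteq> 0"
  shows "BB x0 = 0 \<longleftrightarrow> (x0 ^ (q-1)) ^ ne = - inverse (b ^ (q-1))"
proof -
  define w where "w = b * x0 powi e2"
  have w0: "w \<noteq> 0" unfolding w_def using x0 bnz by simp
  have wq: "w ^ q = w * w ^ (q-1)" using q_ge2 by (cases q) auto
  have "BB x0 = w + w ^ q" unfolding BB_def sig_def w_def ..
  hence "BB x0 = 0 \<longleftrightarrow> w ^ q = - w" by (metis add.commute eq_neg_iff_add_eq_0)
  also have "\<dots> \<longleftrightarrow> w * w ^ (q-1) = w * (-1)" using wq by simp
  also have "\<dots> \<longleftrightarrow> w ^ (q-1) = -1" using w0 by (simp only: mult_cancel_left) simp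
  also have "w ^ (q-1) = b ^ (q-1) * (x0 ^ (q-1)) powi e2"
    unfolding w_def by (simp add: power_mult_distrib power_int_power' power_int_power mult.commute)
  also have "(x0 ^ (q-1)) powi e2 = (x0 ^ (q-1)) ^ ne"
  proof -
    have "(x0 ^ (q-1)) ^ (q+1) = 1" by (simp only: power_mult[symmetric] nz_pow[OF x0])
    thus ?thesis unfolding ne_def by (intro powi_mod) simp_all
  qed
  finally have eq: "BB x0 = 0 \<longleftrightarrow> b ^ (q-1) * (x0 ^ (q-1)) ^ ne = -1" .
  have c0: "b ^ (q-1) \<noteq> 0" using bnz by simp
  have "b ^ (q-1) * X = -1 \<longleftrightarrow> X = - inverse (b ^ (q-1))" for X
  proof
    assume "b ^ (q-1) * X = -1"
    hence "inverse (b ^ (q-1)) * (b ^ (q-1) * X) = inverse (b ^ (q-1)) * (-1)" by simp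
    thus "X = - inverse (b ^ (q-1))" using c0 by (simp add: mult.assoc[symmetric])
  next
    assume "X = - inverse (b ^ (q-1))"
    thus "b ^ (q-1) * X = -1" using c0 by simp
  qed
  thus ?thesis using eq by simp
qed

lemma coprime_ne: "coprime ne (q+1)"
proof -
  have g1: "gcd (int (q+1)) e2 = 1" using ge by (simp add: add.commute)
  have h: "gcd (int (q+1)) e2 = 1 \<longleftrightarrow> coprime ne (q+1)" unfolding ne_def by (rule gcd_int_helper) simp
  show ?thesis by (rule iffD1[OF h g1])
qed

lemma rho_count: "card {z \<in> mu. z ^ ne = - inverse (b ^ (q-1))} = 1"
proof -
  have i: "(- inverse (b ^ (q-1))) ^ (q+1) = (-1) ^ (q+1) * (inverse (b ^ (q-1))) ^ (q+1)"
    by (rule power_minus)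
  have ii: "(inverse (b ^ (q-1))) ^ (q+1) = inverse ((b ^ (q-1)) ^ (q+1))" by (rule power_inverse)
  have iii: "(b ^ (q-1)) ^ (q+1) = 1" by (simp only: power_mult[symmetric] nz_pow[OF bnz])
  have rho: "(- inverse (b ^ (q-1))) ^ (q+1) = 1" unfolding i ii iii neg1_pow by simp
  have "card {z. z ^ (q+1) = 1 \<and> z ^ ne = - inverse (b ^ (q-1))} = 1"
    by (rule root_unique[OF _ coprime_ne rho]) simp
  moreover have "{z \<in> mu. z ^ ne = - inverse (b ^ (q-1))} = {z. z ^ (q+1) = 1 \<and> z ^ ne = - inverse (b ^ (q-1))}"
    unfolding mu_def by blast
  ultimately show ?thesis by simp
qed

lemma dir1:
  assumes g: "gcd (int q - 1) dd = 1"
  shows "card Zs = q"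
proof -
  have iq: "int q - 1 = int (q - 1)" using q_ge2 by simp
  from g have g': "gcd (int (q-1)) dd = 1" unfolding iq .
  have h: "gcd (int (q-1)) dd = 1 \<longleftrightarrow> coprime nd (q-1)" unfolding nd_def by (rule gcd_int_helper) (use q_ge2 in simp)
  have cop: "coprime nd (q-1)" by (rule iffD1[OF h g'])
  define P where "P z = (z ^ ne = - inverse (b ^ (q-1)))" for z :: 'a
  have fz: "card {x \<in> Zs. x ^ (q-1) = z} = (if P z then 0 else 1)" if z: "z \<in> mu" for z
  proof -
    obtain x0 where x0: "x0 \<noteq> 0" "x0 ^ (q-1) = z" using surj_mu[OF z] by blast
    have "card {x \<in> Zs. x ^ (q-1) = z} = card {l::'a. l ^ (q-1) = 1 \<and> l ^ nd = r0 x0}"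
      using fiber_Zs[OF x0(1)] x0 by simp
    also have "\<dots> = (if BB x0 = 0 then 0 else 1)"
    proof (cases "BB x0 = 0")
      case True
      hence "r0 x0 = 0" unfolding r0_def by simp
      hence "r0 x0 ^ (q-1) \<noteq> 1" using q_ge2 by (simp add: power_0_left)
      thus ?thesis using True root_none by simp
    next
      case False
      hence "r0 x0 \<noteq> 0" unfolding r0_def using CC_nz[OF x0(1)] by simp
      hence "r0 x0 ^ (q-1) = 1" using Kf_nonzero_pow[OF r0_Kf] by simp
      thus ?thesis using False root_unique[OF _ cop] q_ge2 by simp
    qed
    also have "(BB x0 = 0) = P z" unfolding P_def using BB_zero[OF x0(1)] x0 by simp
    finally show ?thesis .
  qed
  have "card Zs = (\<Sum>z\<in>mu. if P z then 0 else 1)" using card_Zs_sum fz by simp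
  also have "\<dots> = (\<Sum>z\<in>mu. if z \<in> {z. \<not> P z} then 1 else 0)" by (intro sum.cong refl) simp
  also have "\<dots> = (\<Sum>z\<in>mu \<inter> {z. \<not> P z}. 1)" by (rule sum.inter_restrict[symmetric]) simp
  also have "\<dots> = card {z \<in> mu. \<not> P z}" by (simp add: Int_def)
  also have "{z \<in> mu. \<not> P z} = mu - {z \<in> mu. P z}" by auto
  also have "card \<dots> = card mu - card {z \<in> mu. P z}" by (rule card_Diff_subset) auto
  also have "card {z \<in> mu. P z} = 1" unfolding P_def by (rule rho_count)
  finally show ?thesis using card_mu by simp
qed

lemma Kst_pow: "l \<in> Kst \<Longrightarrow> l ^ n \<in> Kst"
proof -
  assume "l \<in> Kst"
  hence l: "l ^ q = l" "l \<noteq> 0" unfolding Kst_def by auto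
  have "(l ^ n) ^ q = (l ^ q) ^ n" by (simp only: power_mult[symmetric] mult.commute)
  thus ?thesis using l unfolding Kst_def by simp
qed

lemma dir2:
  assumes cz: "card Zs = q"
  shows "gcd (int q - 1) dd = 1"
proof -
  have G: "0 \<notin> Kst" "\<And>x y. x \<in> Kst \<Longrightarrow> y \<in> Kst \<Longrightarrow> x * y \<in> Kst" "\<And>x. x \<in> Kst \<Longrightarrow> inverse x \<in> Kst"
    using Kst_nz Kst_mult Kst_inv by auto
  define h where "h = card {l \<in> Kst. l ^ nd = 1}"
  have fib: "h dvd card {l \<in> Kst. l ^ nd = r}" for r
  proof (cases "\<exists>l0 \<in> Kst. l0 ^ nd = r")
    case True
    then obtain l0 where "l0 \<in> Kst" "l0 ^ nd = r" by blast
    thus ?thesis using pow_fiber_card[OF G, of l0 nd] unfolding h_def by simp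
  next
    case False
    hence "{l \<in> Kst. l ^ nd = r} = {}" by blast
    thus ?thesis by (simp only: card.empty dvd_0_right)
  qed
  have "h dvd card Zs"
  proof -
    have "h dvd (\<Sum>z\<in>mu. card {x \<in> Zs. x ^ (q-1) = z})"
    proof (rule dvd_sum)
      fix z assume z: "z \<in> mu"
      obtain x0 where x0: "x0 \<noteq> 0" "x0 ^ (q-1) = z" using surj_mu[OF z] by blast
      have "card {x \<in> Zs. x ^ (q-1) = z} = card {l \<in> Kst. l ^ nd = r0 x0}"
        using fiber_Zs[OF x0(1)] x0 unfolding Kst_alt2 by simp
      thus "h dvd card {x \<in> Zs. x ^ (q-1) = z}" using fib by simp
    qed
    thus ?thesis using card_Zs_sum by simp
  qed
  hence hq: "h dvd q" using cz by simp
  have cK: "q - 1 = h * card ((\<lambda>x. x ^ nd) ` Kst)"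
    using pow_card[OF _ G, of nd] card_Kst unfolding h_def by simp
  hence hq1: "h dvd q - 1" by simp
  have "h dvd q - (q - 1)" by (rule dvd_diff_nat[OF hq hq1])
  moreover have "q - (q - 1) = 1" using q_ge2 by simp
  ultimately have "h dvd 1" by simp
  hence h1: "h = 1" by simp
  have imK: "(\<lambda>x. x ^ nd) ` Kst = Kst"
  proof (rule card_subset_eq)
    show "(\<lambda>x. x ^ nd) ` Kst \<subseteq> Kst" using Kst_pow by auto
    show "card ((\<lambda>x. x ^ nd) ` Kst) = card Kst" using cK h1 card_Kst by simp
  qed simp
  define g where "g = gcd nd (q - 1)"
  have gpos: "g > 0" unfolding g_def using q_ge2 by simp
  define m' where "m' = (q - 1) div g"
  have gd: "g dvd q - 1" "g dvd nd" unfolding g_def by auto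
  have "g \<le> q - 1" using dvd_imp_le[OF gd(1)] q_ge2 by simp
  hence "m' > 0" unfolding m'_def using gpos by (simp add: div_greater_zero_iff)
  hence m'pos: "m' \<ge> 1" by simp
  have "Kst \<subseteq> {x. x ^ m' = 1}"
  proof
    fix l assume "l \<in> Kst"
    then obtain u where u: "u \<in> Kst" "l = u ^ nd" using imK by auto
    have u1: "u ^ (q-1) = 1" using u(1) Kst_alt2 by auto
    obtain a' where a': "q - 1 = g * a'" using gd(1) by (elim dvdE)
    obtain c' where c': "nd = g * c'" using gd(2) by (elim dvdE)
    have m'a: "m' = a'" unfolding m'_def a' using gpos by simp
    have nddiv: "nd div g = c'" unfolding c' using gpos by simp
    have e1': "nd * m' = g * c' * a'" unfolding m'a by (simp only: c')
    have e2': "(q - 1) * (nd div g) = g * a' * c'" unfolding nddiv by (simp only: a')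
    have ee: "nd * m' = (q - 1) * (nd div g)" unfolding e1' e2' by (simp only: mult_ac)
    have "l ^ m' = (u ^ (q-1)) ^ (nd div g)" unfolding u(2) by (simp only: power_mult[symmetric] ee)
    thus "l \<in> {x. x ^ m' = 1}" using u1 by simp
  qed
  hence "card Kst \<le> card {x::'a. x ^ m' = 1}" by (intro card_mono) auto
  also have "\<dots> \<le> m'" by (rule card_pow_eq_le[OF m'pos])
  finally have "q - 1 \<le> (q - 1) div g" using card_Kst unfolding m'_def by simp
  hence "g = 1"
  proof (rule contrapos_pp)
    assume "g \<noteq> 1"
    hence "1 < g" using gpos by simp
    hence "(q - 1) div g < q - 1" using q_ge2 by (intro div_less_dividend) auto
    thus "\<not> q - 1 \<le> (q - 1) div g" by simp
  qed
  hence "coprime nd (q-1)" unfolding coprime_iff_gcd_eq_1 g_def .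
  moreover have h: "gcd (int (q-1)) dd = 1 \<longleftrightarrow> coprime nd (q-1)" unfolding nd_def by (rule gcd_int_helper) (use q_ge2 in simp)
  ultimately have "gcd (int (q-1)) dd = 1" by (rule iffD2[rotated])
  moreover have iq: "int q - 1 = int (q - 1)" using q_ge2 by simp
  ultimately show ?thesis by (simp only: iq)
qed

lemma T_eq: "T_sum q e1 e2 a b = of_nat q * of_nat (card Zs) - of_nat (q^2 - 1)"
proof -
  have KK: "{y::'a. y ^ q = y \<and> y \<noteq> 0} = Kst" by (simp add: Kst_def)
  have "T_sum q e1 e2 a b = (\<Sum>y\<in>Kst. \<Sum>x\<in>UNIV - {0}. can_add_char (y * cx x))"
    unfolding T_sum_def S_sum_def KK
    by (intro sum.cong refl) (simp add: cx_def distrib_left mult.assoc)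
  also have "\<dots> = (\<Sum>x\<in>UNIV - {0}. \<Sum>y\<in>Kst. can_add_char (y * cx x))" by (rule sum.swap)
  also have "\<dots> = (\<Sum>x\<in>UNIV - {0}. of_nat q * (if x \<in> Zs then 1 else 0) - 1)"
  proof (intro sum.cong refl)
    fix x :: 'a assume x: "x \<in> UNIV - {0}"
    have q1: "(of_nat (q - 1) :: complex) = of_nat q - 1" using q_ge2 by (simp add: of_nat_diff)
    show "(\<Sum>y\<in>Kst. can_add_char (y * cx x)) = of_nat q * (if x \<in> Zs then 1 else 0) - 1"
      using x unfolding char_sum Zs_def q1 by simp
  qed
  also have "\<dots> = of_nat q * (\<Sum>x\<in>UNIV - {0}. if x \<in> Zs then 1 else 0) - of_nat (card (UNIV - {0::'a}))"
    by (simp add: sum_subtractf sum_distrib_left)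
  also have "(\<Sum>x\<in>UNIV - {0::'a}. if x \<in> Zs then 1 else 0) = (of_nat (card Zs) :: complex)"
  proof -
    have "(\<Sum>x\<in>UNIV - {0::'a}. if x \<in> Zs then 1 else 0) = (\<Sum>x\<in>(UNIV - {0}) \<inter> Zs. 1::complex)"
      by (rule sum.inter_restrict[symmetric]) simp
    also have "(UNIV - {0}) \<inter> Zs = Zs" unfolding Zs_def by auto
    finally show ?thesis by simp
  qed
  also have "card (UNIV - {0::'a}) = q^2 - 1" using card by (simp add: card_Diff_subset)
  finally show ?thesis .
qed

lemma main: "gcd (int q - 1) (2 * e1 - e2) = 1 \<longleftrightarrow> T_sum q e1 e2 a b = 1"
proof -
  have e: "of_nat (q^2 - 1) = (of_nat (q^2) :: complex) - 1" using q_ge2 by (simp add: of_nat_diff)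
  have r: "x - (y - 1) = (x - y) + (1::complex)" for x y by simp
  have "T_sum q e1 e2 a b = 1 \<longleftrightarrow> (of_nat q * of_nat (card Zs) - of_nat (q^2)) + 1 = (1::complex)"
    unfolding T_eq e r ..
  also have "\<dots> \<longleftrightarrow> of_nat (q * card Zs) = (of_nat (q^2) :: complex)" by simp
  also have "\<dots> \<longleftrightarrow> q * card Zs = q * q" by (simp only: of_nat_eq_iff power2_eq_square)
  also have "\<dots> \<longleftrightarrow> card Zs = q" using q_ge2 by simp
  finally have t: "T_sum q e1 e2 a b = 1 \<longleftrightarrow> card Zs = q" .
  have g: "gcd (int q - 1) (2 * e1 - e2) = 1 \<longleftrightarrow> card Zs = q"
  proof
    assume "gcd (int q - 1) (2 * e1 - e2) = 1"
    thus "card Zs = q" by (rule dir1[unfolded dd_def])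
  next
    assume "card Zs = q"
    thus "gcd (int q - 1) (2 * e1 - e2) = 1" by (rule dir2[unfolded dd_def])
  qed
  show ?thesis using t g by simp
qed

end

end

theorem lemma3:
  fixes q :: nat and e1 e2 :: int and a b :: "'a::{field,finite}"
  assumes "\<exists>p k. prime p \<and> k > 0 \<and> q = p ^ k"
    and "card (UNIV::'a set) = q ^ 2"
    and "a ^ q + a \<noteq> 0"
    and "b \<noteq> 0"
    and "gcd (int q + 1) e2 = 1"
  shows "gcd (int q - 1) (2 * e1 - e2) = 1 \<longleftrightarrow> T_sum q e1 e2 a b = 1"
proof -
  obtain p k where pk: "prime p" "k > 0" "q = p ^ k" using assms(1) by blast
  interpret ffc p k q "TYPE('a)" by unfold_locales (use pk assms(2) in auto)
  show ?thesis by (rule main[OF assms(3) assms(4) assms(5)])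
qed

end
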